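(* For every $n\ge1$ there is an injective map from $\bar{Q}_1(0,n)$ to $\bar{P}_1(0,n)$.
   Context: Partitions: $\lambda_1\ge\cdots\ge\lambda_\ell>0$, $\ell(\lambda)=\ell$, $\lambda_i=0$ for $i>\ell$, $s(\lambda)$ the smallest part with $s(\emptyset)=+\infty$. Rank $=\lambda_1-\ell$. Durfee symbol $(\alpha,\beta)_j$ of $\lambda$: $j$ is the largest integer with $\lambda_j\ge j$ (side of the Durfee square), $\alpha$ is the conjugate of $(\lambda_1-j,\dots,\lambda_j-j)$ (columns right of the square), $\beta=(\lambda_{j+1},\lambda_{j+2},\dots)$ (rows below); $|\lambda|=|\alpha|+|\beta|+j^2$. $\bar{Q}_1(0,n)$ is the set of partitions of $n$ whose Durfee symbol $(\alpha,\beta)_j$ satisfies $j\ge1$, $\beta_1=j$, $\ell(\beta)-\ell(\alpha)\ge1$, $\alpha_1=\alpha_2=j>\alpha_3$ and $s(\beta)\ge3$. $\bar{P}_1(0,n)$ is the set of partitions of $n$ with rank $\ge0$ whose Durfee symbol $(\gamma,\delta)_{j'}$ satisfies $j'\ge1$, $\ell(\gamma)=\ell(\delta)$, $\gamma_1\le j'-3$, $\delta_1=j'$ and $s(\delta)\ge2$. *)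

theory Defs
  imports Main "HOL-Library.Extended_Nat"
begin

definition is_partition :: "nat list \<Rightarrow> bool" where
  "is_partition p \<longleftrightarrow> sorted_wrt (\<ge>) p \<and> (\<forall>x\<in>set p. 0 < x)"

definition partitions_of :: "nat \<Rightarrow> nat list set" where
  "partitions_of n = {p. is_partition p \<and> sum_list p = n}"

text \<open>1-indexed part: part p i = lambda_i, with lambda_i = 0 for i > l(lambda) (and i = 0).\<close>
definition part :: "nat list \<Rightarrow> nat \<Rightarrow> nat" where
  "part p i = (if 1 \<le> i \<and> i \<le> length p then p ! (i - 1) else 0)"

definition smallest :: "nat list \<Rightarrow> enat" where
  "smallest p = (if p = [] then \<infinity> else enat (Min (set p)))"

definition rank :: "nat list \<Rightarrow> int" where
  "rank p = int (part p 1) - int (length p)"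

definition durfee :: "nat list \<Rightarrow> nat" where
  "durfee p = (GREATEST j. j \<le> length p \<and> (j = 0 \<or> j \<le> part p j))"

definition conjugate :: "nat list \<Rightarrow> nat list" where
  "conjugate mu = map (\<lambda>i. card {k \<in> {1..length mu}. i \<le> part mu k}) [1..<part mu 1 + 1]"

definition dalpha :: "nat list \<Rightarrow> nat list" where
  "dalpha p = conjugate (filter (\<lambda>x. 0 < x) (map (\<lambda>x. x - durfee p) (take (durfee p) p)))"

definition dbeta :: "nat list \<Rightarrow> nat list" where
  "dbeta p = drop (durfee p) p"

definition Q1bar :: "nat \<Rightarrow> nat list set" where
  "Q1bar n = {p \<in> partitions_of n.
     (let j = durfee p; \<alpha> = dalpha p; \<beta> = dbeta p in
       j \<ge> 1 \<and> part \<beta> 1 = j \<and> int (length \<beta>) - int (length \<alpha>) \<ge> 1 \<and>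
       part \<alpha> 1 = j \<and> part \<alpha> 2 = j \<and> j > part \<alpha> 3 \<and> smallest \<beta> \<ge> 3)}"

definition P1bar :: "nat \<Rightarrow> nat list set" where
  "P1bar n = {p \<in> partitions_of n. rank p \<ge> 0 \<and>
     (let j' = durfee p; \<gamma> = dalpha p; \<delta> = dbeta p in
       j' \<ge> 1 \<and> length \<gamma> = length \<delta> \<and> int (part \<gamma> 1) \<le> int j' - 3 \<and>
       part \<delta> 1 = j' \<and> smallest \<delta> \<ge> 2)}"

end

theory Submission imports Defs "HOL-Library.Multiset" begin

definition cnt :: "nat list \<Rightarrow> nat \<Rightarrow> nat" where
  "cnt xs k = length (filter (\<lambda>x. k \<le> x) xs)"

lemma cnt_card: "cnt xs k = card {m. m < length xs \<and> k \<le> xs ! m}"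
  by (simp add: cnt_def length_filter_conv_card)

lemma cnt_ge:
  assumes s: "sorted_wrt (\<ge>) xs" and i: "i < length xs" and k: "k \<le> xs ! i"
  shows "i + 1 \<le> cnt xs k"
proof -
  have "{0..i} \<subseteq> {m. m < length xs \<and> k \<le> xs ! m}"
  proof
    fix m assume "m \<in> {0..i}"
    hence m: "m \<le> i" by simp
    have "xs ! i \<le> xs ! m"
    proof (cases "m = i")
      case False with m have "m < i" by simp
      from sorted_wrt_nth_less[OF s this i] show ?thesis by simp
    qed simp
    with m i k show "m \<in> {m. m < length xs \<and> k \<le> xs ! m}" by simp
  qed
  from card_mono[OF _ this] have "card {0..i} \<le> cnt xs k" by (simp add: cnt_card)
  thus ?thesis by simp
qed

lemma cnt_le:
  assumes s: "sorted_wrt (\<ge>) xs" and i: "i < length xs" and k: "xs ! i < k"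
  shows "cnt xs k \<le> i"
proof -
  have "{m. m < length xs \<and> k \<le> xs ! m} \<subseteq> {0..<i}"
  proof
    fix m assume m: "m \<in> {m. m < length xs \<and> k \<le> xs ! m}"
    show "m \<in> {0..<i}"
    proof (rule ccontr)
      assume "m \<notin> {0..<i}" hence "i \<le> m" by simp
      then have "xs ! m \<le> xs ! i"
      proof (cases "i = m")
        case False with \<open>i \<le> m\<close> have "i < m" by simp
        from sorted_wrt_nth_less[OF s this] m show ?thesis by simp
      qed simp
      with m k show False by simp
    qed
  qed
  from card_mono[OF _ this] show ?thesis by (simp add: cnt_card)
qed

lemma cnt_mono: "k \<le> k' \<Longrightarrow> cnt xs k' \<le> cnt xs k"
  unfolding cnt_def by (induction xs) auto

lemma cnt_len: "cnt xs k \<le> length xs"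
  unfolding cnt_def by simp

lemma cnt_all: "\<forall>x\<in>set xs. k \<le> x \<Longrightarrow> cnt xs k = length xs"
  unfolding cnt_def by (simp add: filter_id_conv[THEN iffD2])

lemma cnt_none: "\<forall>x\<in>set xs. x < k \<Longrightarrow> cnt xs k = 0"
  unfolding cnt_def by (auto simp add: filter_empty_conv)

lemma cnt_Suc_count: "cnt xs k = count (mset xs) k + cnt xs (Suc k)"
  unfolding cnt_def by (induction xs) auto

lemma sum_cnt: "\<forall>x\<in>set xs. x \<le> M \<Longrightarrow> sum_list xs = (\<Sum>k\<in>{1..M}. cnt xs k)"
proof (induction xs)
  case Nil thus ?case by (simp add: cnt_def)
next
  case (Cons x xs)
  have "(\<Sum>k\<in>{1..M}. cnt (x # xs) k) = (\<Sum>k\<in>{1..M}. (if k \<le> x then 1 else 0) + cnt xs k)"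
    by (rule sum.cong) (auto simp: cnt_def)
  also have "\<dots> = (\<Sum>k\<in>{1..M}. (if k \<le> x then 1 else 0::nat)) + (\<Sum>k\<in>{1..M}. cnt xs k)"
    by (simp add: sum.distrib)
  also have "(\<Sum>k\<in>{1..M}. (if k \<le> x then 1 else 0::nat)) = card {k\<in>{1..M}. k \<le> x}"
    by (simp add: sum.If_cases Int_def)
  also have "{k\<in>{1..M}. k \<le> x} = {1..x}" using Cons.prems by auto
  finally show ?case using Cons by simp
qed

lemma eq_by_cnt:
  assumes "is_partition xs" "is_partition ys" "\<And>k. cnt xs k = cnt ys k"
  shows "xs = ys"
proof -
  have "count (mset xs) k = count (mset ys) k" for k
    using cnt_Suc_count[of xs k] cnt_Suc_count[of ys k] assms(3)[of k] assms(3)[of "Suc k"] by simp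
  hence m: "mset (rev xs) = mset (rev ys)" by (simp add: multiset_eq_iff)
  have "sorted (rev xs)" "sorted (rev ys)" using assms(1,2)
    by (auto simp: is_partition_def sorted_wrt_rev)
  with m have "rev xs = rev ys"
    by (metis properties_for_sort sorted_sort_id)
  thus ?thesis by simp
qed


lemma sorted_nth_le:
  fixes xs :: "nat list"
  assumes "sorted_wrt (\<ge>) xs" "i \<le> k" "k < length xs"
  shows "xs ! k \<le> xs ! i"
proof (cases "i = k")
  case False
  with assms have "i < k" by simp
  from sorted_wrt_nth_less[OF assms(1) this assms(3)] show ?thesis by simp
qed simp

lemma conj_len: "length (conjugate mu) = Defs.part mu 1"
  by (simp add: conjugate_def)

lemma conj_nth: "i < Defs.part mu 1 \<Longrightarrow> conjugate mu ! i = card {k \<in> {1..length mu}. Suc i \<le> Defs.part mu k}"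
  unfolding conjugate_def by (simp del: upt_Suc)

lemma Q_props:
  assumes "p \<in> Q1bar n"
  defines "j \<equiv> durfee p"
  shows "is_partition p \<and> sum_list p = n \<and> (\<forall>x\<in>set p. 3 \<le> x) \<and> 1 \<le> j \<and> j < length p
    \<and> p ! j = j \<and> p ! (j - 1) = j + 2 \<and> p ! 0 + 1 \<le> length p"
proof -
  define \<nu> where "\<nu> = filter (\<lambda>x. 0 < x) (map (\<lambda>x. x - j) (take j p))"
  define \<alpha> where "\<alpha> = conjugate \<nu>"
  define \<beta> where "\<beta> = drop j p"
  have pp: "is_partition p" and sp: "sum_list p = n" using assms(1) by (auto simp: Q1bar_def partitions_of_def)
  have srt: "sorted_wrt (\<ge>) p" using pp by (simp add: is_partition_def)
  have al: "dalpha p = \<alpha>" by (simp add: dalpha_def \<alpha>_def \<nu>_def j_def)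
  have be: "dbeta p = \<beta>" by (simp add: dbeta_def \<beta>_def j_def)
  have c: "j \<ge> 1" "Defs.part \<beta> 1 = j" "int (length \<beta>) - int (length \<alpha>) \<ge> 1"
     "Defs.part \<alpha> 2 = j" "j > Defs.part \<alpha> 3" "smallest \<beta> \<ge> 3"
    using assms(1) by (auto simp: Q1bar_def Let_def al be j_def)
  have "Defs.part \<beta> 1 \<noteq> 0" using c(1,2) by simp
  moreover have pb: "Defs.part \<beta> 1 = (if 1 \<le> length \<beta> then \<beta>!0 else 0)" unfolding Defs.part_def by simp
  ultimately have lb: "1 \<le> length \<beta>" by presburger
  with pb c(2) have b0: "\<beta> ! 0 = j" by simp
  have jl: "j < length p" and pj: "p ! j = j" using lb b0 by (auto simp: \<beta>_def)
  have bne: "\<beta> \<noteq> []" using lb by auto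
  have "enat (Min (set \<beta>)) \<ge> 3" using c(6) bne by (simp add: smallest_def)
  hence "Min (set \<beta>) \<ge> 3"
    by (metis enat_ord_simps(1) numeral_eq_enat)
  hence b3: "\<forall>x\<in>set \<beta>. 3 \<le> x" using Min_le[of "set \<beta>"] by (meson List.finite_set le_trans)
  have la: "length \<alpha> = Defs.part \<nu> 1" by (simp add: \<alpha>_def conjugate_def)
  have la2: "2 \<le> length \<alpha>" using c(1,4) by (auto simp: Defs.part_def split: if_splits)
  have a1: "\<alpha> ! 1 = card {k \<in> {1..length \<nu>}. 2 \<le> Defs.part \<nu> k}"
    using la2 conj_nth[of 1 \<nu>] la by (simp add: \<alpha>_def eval_nat_numeral)
  hence a1': "card {k \<in> {1..length \<nu>}. 2 \<le> Defs.part \<nu> k} = j" using c(4) la2 by (simp add: Defs.part_def)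
  have lnu: "length \<nu> \<le> j" unfolding \<nu>_def
    using length_filter_le[of "\<lambda>x. 0 < x" "map (\<lambda>x. x - j) (take j p)"] by simp
  have sub: "{k \<in> {1..length \<nu>}. 2 \<le> Defs.part \<nu> k} \<subseteq> {1..length \<nu>}" by auto
  have "card {k \<in> {1..length \<nu>}. 2 \<le> Defs.part \<nu> k} \<le> length \<nu>"
    using card_mono[OF _ sub] by simp
  with a1' lnu have lnuj: "length \<nu> = j" by simp
  have seteq: "{k \<in> {1..length \<nu>}. 2 \<le> Defs.part \<nu> k} = {1..length \<nu>}"
    using card_subset_eq[OF _ sub] a1' lnuj by simp
  have nueq: "\<nu> = map (\<lambda>x. x - j) (take j p)"
  proof -
    have "\<forall>x\<in>set (map (\<lambda>x. x - j) (take j p)). 0 < x"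
    proof (rule ccontr)
      assume "\<not> ?thesis"
      then obtain x where "x \<in> set (map (\<lambda>x. x - j) (take j p))" "\<not> 0 < x" by blast
      from length_filter_less[of x _ "\<lambda>x. 0 < x", OF this] lnuj jl show False by (simp add: \<nu>_def)
    qed
    thus ?thesis unfolding \<nu>_def by (simp add: filter_id_conv)
  qed
  have nuk: "Defs.part \<nu> k = p ! (k - 1) - j" if "1 \<le> k" "k \<le> j" for k
  proof -
    have "k - 1 < j" using that by simp
    hence "take j p ! (k - 1) = p ! (k - 1)" by simp
    thus ?thesis using that jl by (simp add: nueq Defs.part_def)
  qed
  have pj1: "p ! (j - 1) \<ge> j + 2"
  proof -
    have "j \<in> {k \<in> {1..length \<nu>}. 2 \<le> Defs.part \<nu> k}" using seteq lnuj c(1) by simp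
    hence "2 \<le> Defs.part \<nu> j" by simp
    thus ?thesis using nuk[of j] c(1) by simp
  qed
  have p0: "p ! (j - 1) \<le> p ! 0" using sorted_nth_le[OF srt, of 0 "j - 1"] jl by simp
  have pj2: "p ! (j - 1) < j + 3"
  proof (cases "3 \<le> length \<alpha>")
    case True
    have "\<alpha> ! 2 = card {k \<in> {1..length \<nu>}. 3 \<le> Defs.part \<nu> k}"
      using True conj_nth[of 2 \<nu>] la by (simp add: \<alpha>_def eval_nat_numeral)
    hence "card {k \<in> {1..j}. 3 \<le> Defs.part \<nu> k} < j" using c(5) True lnuj by (simp add: Defs.part_def)
    hence "\<exists>k\<in>{1..j}. \<not> 3 \<le> Defs.part \<nu> k"
    proof (rule contrapos_pp)
      assume "\<not> (\<exists>k\<in>{1..j}. \<not> 3 \<le> Defs.part \<nu> k)"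
      hence "{k \<in> {1..j}. 3 \<le> Defs.part \<nu> k} = {1..j}" by auto
      thus "\<not> card {k \<in> {1..j}. 3 \<le> Defs.part \<nu> k} < j" by simp
    qed
    then obtain k where k: "1 \<le> k" "k \<le> j" "Defs.part \<nu> k < 3" by auto
    have "p ! (j - 1) \<le> p ! (k - 1)" using sorted_nth_le[OF srt, of "k - 1" "j - 1"] k jl by simp
    with k nuk[OF k(1,2)] pj1 show ?thesis by simp
  next
    case False
    hence "Defs.part \<nu> 1 < 3" using la by simp
    with nuk[of 1] c(1) p0 pj1 show ?thesis by simp
  qed
  have pjj: "p ! (j - 1) = j + 2" using pj1 pj2 by simp
  have "length \<alpha> = p ! 0 - j" using la nuk[of 1] c(1) by simp
  hence len: "p ! 0 + 1 \<le> length p" using c(3) p0 pjj by (simp add: \<beta>_def)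
  have all3: "\<forall>x\<in>set p. 3 \<le> x"
  proof
    fix x assume "x \<in> set p"
    then obtain m where m: "m < length p" "x = p ! m" by (auto simp: in_set_conv_nth)
    show "3 \<le> x"
    proof (cases "m < j")
      case True
      hence "p ! (j - 1) \<le> p ! m" using sorted_nth_le[OF srt, of m "j - 1"] jl by simp
      with pjj m c(1) show ?thesis by simp
    next
      case False
      hence "x \<in> set \<beta>" using m by (auto simp: \<beta>_def in_set_conv_nth intro!: exI[of _ "m - j"])
      with b3 show ?thesis by simp
    qed
  qed
  show ?thesis using pp sp all3 c(1) jl pj pjj len by simp
qed


definition g :: "nat list \<Rightarrow> nat \<Rightarrow> nat \<Rightarrow> nat" where
  "g p j q = (if q = 1 then length p else if q \<le> j - 2 then cnt p (q + 2)
              else if q \<le> j + 2 then j + 1 else cnt p q + 2)"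

definition G :: "nat list \<Rightarrow> nat \<Rightarrow> nat list" where
  "G p j = map (g p j) [1..<length p + 1]"

definition recov :: "nat list \<Rightarrow> nat \<Rightarrow> nat \<Rightarrow> nat \<Rightarrow> nat" where
  "recov mu j L k = (if k \<le> 3 then L else if k \<le> j then mu ! (k - 3) else if k \<le> j + 2 then j
       else if k \<le> L then mu ! (k - 1) - 2 else 0)"

context
  fixes p :: "nat list" and j :: nat
  assumes srt: "sorted_wrt (\<ge>) p" and all3: "\<forall>x\<in>set p. 3 \<le> x" and j1: "1 \<le> j"
    and jl: "j < length p" and pj: "p ! j = j" and pj1: "p ! (j - 1) = j + 2"
    and p0: "p ! 0 + 1 \<le> length p"
begin

lemma j3: "3 \<le> j" using all3 jl pj nth_mem by fastforce

lemma L3: "j + 3 \<le> length p"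
proof -
  have "p ! (j - 1) \<le> p ! 0" using sorted_nth_le[OF srt, of 0 "j - 1"] jl by simp
  thus ?thesis using pj1 p0 by simp
qed

lemma c3: "k \<le> j \<Longrightarrow> j + 1 \<le> cnt p k"
  using cnt_ge[OF srt jl] pj by simp

lemma c4: "j + 3 \<le> k \<Longrightarrow> cnt p k \<le> j - 1"
  using cnt_le[OF srt, of "j - 1" k] jl pj1 j1 by simp

lemma c5: "k \<le> 3 \<Longrightarrow> cnt p k = length p"
  using all3 by (intro cnt_all) auto

lemma c6a: "cnt p (j + 1) = j"
  using cnt_ge[OF srt, of "j - 1" "j+1"] cnt_le[OF srt jl, of "j+1"] jl pj1 pj j1 by simp

lemma c6b: "cnt p (j + 2) = j"
  using cnt_ge[OF srt, of "j - 1" "j+2"] cnt_le[OF srt jl, of "j+2"] jl pj1 pj j1 by simp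

lemma c7: "length p \<le> k \<Longrightarrow> cnt p k = 0"
proof -
  assume k: "length p \<le> k"
  have "\<forall>x\<in>set p. x < k"
  proof
    fix x assume "x \<in> set p"
    then obtain m where m: "m < length p" "x = p ! m" by (auto simp: in_set_conv_nth)
    have "p ! m \<le> p ! 0" using sorted_nth_le[OF srt, of 0 m] m by simp
    with m p0 k show "x < k" by simp
  qed
  thus ?thesis by (rule cnt_none)
qed

lemma g_mono: "1 \<le> q \<Longrightarrow> q \<le> r \<Longrightarrow> g p j r \<le> g p j q"
proof -
  assume q: "1 \<le> q" and qr: "q \<le> r"
  have A: "cnt p (r + 2) \<le> cnt p (q + 2)" "cnt p r \<le> cnt p q" using cnt_mono qr by auto
  have B: "cnt p (r + 2) \<le> length p" "cnt p r \<le> length p" by (simp_all add: cnt_len)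
  have C: "q \<le> j - 2 \<Longrightarrow> j + 1 \<le> cnt p (q + 2)" using c3[of "q+2"] j3 by simp
  have D: "\<not> r \<le> j + 2 \<Longrightarrow> cnt p r \<le> j - 1" using c4[of r] by simp
  show ?thesis using A B C D q qr j3 L3 unfolding g_def by auto
qed

lemma g_ge2: "1 \<le> q \<Longrightarrow> 2 \<le> g p j q"
proof -
  assume q: "1 \<le> q"
  have C: "q \<le> j - 2 \<Longrightarrow> j + 1 \<le> cnt p (q + 2)" using c3[of "q+2"] j3 by simp
  show ?thesis using C q j3 L3 unfolding g_def by auto
qed

lemma g_mid: "j - 1 \<le> q \<Longrightarrow> q \<le> j + 2 \<Longrightarrow> g p j q = j + 1"
  using j3 unfolding g_def by auto

lemma G_len: "length (G p j) = length p" by (simp add: G_def del: upt_Suc)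

lemma G_nth: "i < length p \<Longrightarrow> G p j ! i = g p j (i + 1)"
  by (simp add: G_def del: upt_Suc)

lemma G_part: "1 \<le> q \<Longrightarrow> q \<le> length p \<Longrightarrow> Defs.part (G p j) q = g p j q"
  by (simp add: Defs.part_def G_len G_nth)

lemma G_sorted: "sorted_wrt (\<ge>) (G p j)"
  unfolding sorted_wrt_iff_nth_less G_len by (auto simp: G_nth intro: g_mono)

lemma G_pos: "\<forall>x\<in>set (G p j). 2 \<le> x"
proof
  fix x assume "x \<in> set (G p j)"
  then obtain i where "i < length p" "x = G p j ! i" by (auto simp: in_set_conv_nth G_len)
  thus "2 \<le> x" using g_ge2[of "i+1"] by (simp add: G_nth)
qed

lemma G_partition: "is_partition (G p j)"
  using G_sorted G_pos by (auto simp: is_partition_def)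

lemma sum_p: "sum_list p = (\<Sum>k\<in>{1..<length p + 1}. cnt p k)"
proof -
  have "\<forall>x\<in>set p. x \<le> length p"
  proof
    fix x assume "x \<in> set p"
    then obtain m where m: "m < length p" "x = p ! m" by (auto simp: in_set_conv_nth)
    have "p ! m \<le> p ! 0" using sorted_nth_le[OF srt, of 0 m] m by simp
    with m p0 show "x \<le> length p" by simp
  qed
  from sum_cnt[OF this] show ?thesis by (simp add: atLeastLessThanSuc_atLeastAtMost)
qed

lemma G_sum: "sum_list (G p j) = sum_list p"
proof -
  define L where "L = length p"
  have Lj: "j + 3 \<le> L" using L3 by (simp add: L_def)
  define A where "A = (\<Sum>k\<in>{4..<j+1}. cnt p k)"
  define B where "B = (\<Sum>k\<in>{j+3..<L+1}. cnt p k)"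
  have "sum_list (G p j) = (\<Sum>q\<in>{1..<L+1}. g p j q)"
    unfolding G_def L_def by (simp add: sum_set_upt_conv_sum_list_nat[symmetric] del: upt_Suc)
  also have "\<dots> = (\<Sum>q\<in>{1..<2}. g p j q) + (\<Sum>q\<in>{2..<j-1}. g p j q)
      + (\<Sum>q\<in>{j-1..<j+3}. g p j q) + (\<Sum>q\<in>{j+3..<L+1}. g p j q)"
    using Lj j3 by (simp add: sum.atLeastLessThan_concat)
  also have "(\<Sum>q\<in>{1..<2}. g p j q) = L" by (simp add: g_def L_def)
  also have "(\<Sum>q\<in>{2..<j-1}. g p j q) = (\<Sum>q\<in>{2..<j-1}. cnt p (q + 2))"
    by (rule sum.cong) (auto simp: g_def)
  also have "\<dots> = A" unfolding A_def
    using sum.shift_bounds_nat_ivl[of "cnt p" 2 2 "j - 1"] j3 by (simp add: add.commute)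
  also have "(\<Sum>q\<in>{j-1..<j+3}. g p j q) = (\<Sum>q\<in>{j-1..<j+3}. j + 1)"
    using j3 by (intro sum.cong) (auto simp: g_def)
  also have "\<dots> = 4 * (j + 1)" using j3 by simp
  also have "(\<Sum>q\<in>{j+3..<L+1}. g p j q) = (\<Sum>q\<in>{j+3..<L+1}. cnt p q + 2)"
    by (rule sum.cong) (auto simp: g_def)
  also have "\<dots> = B + (\<Sum>q\<in>{j+3..<L+1}. 2)" by (simp only: sum.distrib B_def)
  also have "(\<Sum>q\<in>{j+3..<L+1}. (2::nat)) = 2 * (L - j - 2)" using Lj by simp
  finally have s1: "sum_list (G p j) = L + A + 4 * (j + 1) + (B + 2 * (L - j - 2))" .
  have "sum_list p = (\<Sum>k\<in>{1..<L+1}. cnt p k)" using sum_p by (simp add: L_def)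
  also have "\<dots> = (\<Sum>k\<in>{1..<4}. cnt p k) + (\<Sum>k\<in>{4..<j+1}. cnt p k)
      + (\<Sum>k\<in>{j+1..<j+3}. cnt p k) + (\<Sum>k\<in>{j+3..<L+1}. cnt p k)"
  proof -
    have "(\<Sum>k\<in>{1..<4}. cnt p k) + (\<Sum>k\<in>{4..<j+1}. cnt p k) = (\<Sum>k\<in>{1..<j+1}. cnt p k)"
      using j3 by (intro sum.atLeastLessThan_concat) auto
    moreover have "(\<Sum>k\<in>{1..<j+1}. cnt p k) + (\<Sum>k\<in>{j+1..<j+3}. cnt p k) = (\<Sum>k\<in>{1..<j+3}. cnt p k)"
      by (intro sum.atLeastLessThan_concat) auto
    moreover have "(\<Sum>k\<in>{1..<j+3}. cnt p k) + (\<Sum>k\<in>{j+3..<L+1}. cnt p k) = (\<Sum>k\<in>{1..<L+1}. cnt p k)"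
      using Lj by (intro sum.atLeastLessThan_concat) auto
    ultimately show ?thesis by linarith
  qed
  also have "(\<Sum>k\<in>{1..<4}. cnt p k) = (\<Sum>k\<in>{1..<4::nat}. L)"
    by (rule sum.cong) (auto simp: c5 L_def)
  also have "(\<Sum>k\<in>{j+1..<j+3}. cnt p k) = cnt p (j+1) + cnt p (j+2)"
    by (simp add: numeral_3_eq_3)
  finally have s2: "sum_list p = 3 * L + A + 2 * j + B" using c6a c6b by (simp add: A_def B_def)
  show ?thesis using s1 s2 Lj by simp
qed

lemma G_durfee: "durfee (G p j) = j + 1"
  unfolding durfee_def
proof (rule Greatest_equality)
  show "j + 1 \<le> length (G p j) \<and> (j + 1 = 0 \<or> j + 1 \<le> Defs.part (G p j) (j + 1))"
    using L3 j3 by (auto simp: G_len G_part g_def)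
next
  fix y assume y: "y \<le> length (G p j) \<and> (y = 0 \<or> y \<le> Defs.part (G p j) y)"
  show "y \<le> j + 1"
  proof (rule ccontr)
    assume "\<not> y \<le> j + 1"
    hence yj: "j + 2 \<le> y" by simp
    have "y \<le> g p j y" using y yj by (auto simp: G_len G_part)
    moreover have "g p j y \<le> g p j (j + 2)" using g_mono[of "j+2" y] yj by simp
    moreover have "g p j (j + 2) = j + 1" using j3 unfolding g_def by auto
    ultimately show False using yj by simp
  qed
qed

lemma G_P: "G p j \<in> P1bar (sum_list p)"
proof -
  define mu where "mu = G p j"
  define L where "L = length p"
  have Lj: "j + 3 \<le> L" using L3 by (simp add: L_def)
  have lmu: "length mu = L" by (simp add: mu_def G_len L_def)
  define \<nu> where "\<nu> = filter (\<lambda>x. 0 < x) (map (\<lambda>x. x - (j + 1)) (take (j + 1) mu))"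
  have dal: "dalpha mu = conjugate \<nu>" by (simp add: dalpha_def \<nu>_def mu_def G_durfee)
  have dbe: "dbeta mu = drop (j + 1) mu" by (simp add: dbeta_def mu_def G_durfee)
  have "0 < length p" using Lj unfolding L_def by linarith
  hence mu0: "mu ! 0 = L" by (simp add: mu_def G_nth L_def g_def)
  have "take (j + 1) mu = mu ! 0 # take j (drop 1 mu)"
  proof -
    have "mu \<noteq> []" using Lj lmu by auto
    hence "mu = mu ! 0 # drop 1 mu" by (cases mu) auto
    hence "take (j + 1) mu = take (Suc j) (mu ! 0 # drop 1 mu)" by simp
    thus ?thesis by (simp only: take_Suc_Cons)
  qed
  hence nu_cons: "\<nu> = (L - (j + 1)) # filter (\<lambda>x. 0 < x) (map (\<lambda>x. x - (j + 1)) (take j (drop 1 mu)))"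
    using mu0 Lj by (simp add: \<nu>_def)
  have pnu: "Defs.part \<nu> 1 = L - (j + 1)" using nu_cons by (simp add: Defs.part_def)
  have lnu: "length \<nu> \<le> j - 2"
  proof -
    define xs where "xs = map (\<lambda>x. x - (j + 1)) (take (j + 1) mu)"
    have "length \<nu> = card {i. i < length xs \<and> 0 < xs ! i}"
      by (simp add: \<nu>_def xs_def length_filter_conv_card)
    also have "{i. i < length xs \<and> 0 < xs ! i} \<subseteq> {0..<j-2}"
    proof
      fix i assume i: "i \<in> {i. i < length xs \<and> 0 < xs ! i}"
      have il: "i < j + 1" using i Lj lmu by (simp add: xs_def)
      show "i \<in> {0..<j-2}"
      proof (rule ccontr)
        assume "i \<notin> {0..<j-2}"
        hence "j - 2 \<le> i" by simp
        have "xs ! i = mu ! i - (j + 1)" using il Lj lmu by (simp add: xs_def)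
        also have "mu ! i = g p j (i + 1)" using il Lj by (simp add: mu_def G_nth L_def)
        also have "\<dots> = j + 1" using \<open>j - 2 \<le> i\<close> il j3 unfolding g_def by auto
        finally show False using i by simp
      qed
    qed
    hence "card {i. i < length xs \<and> 0 < xs ! i} \<le> card {0..<j-2}" by (intro card_mono) auto
    finally show ?thesis by simp
  qed
  have lga: "length (dalpha mu) = L - (j + 1)" unfolding dal conj_len pnu by (rule refl)
  have pga: "Defs.part (dalpha mu) 1 \<le> j - 2"
  proof -
    have "Defs.part (dalpha mu) 1 = conjugate \<nu> ! 0" using lga Lj unfolding Defs.part_def dal by auto
    also have "\<dots> = card {k \<in> {1..length \<nu>}. 1 \<le> Defs.part \<nu> k}" using conj_nth[of 0 \<nu>] pnu Lj by simp
    also have "\<dots> \<le> card {1..length \<nu>}" by (intro card_mono) auto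
    finally show ?thesis using lnu by simp
  qed
  have ldb: "length (dbeta mu) = L - (j + 1)" by (simp add: dbe lmu)
  have pdb: "Defs.part (dbeta mu) 1 = j + 1"
  proof -
    have "Defs.part (dbeta mu) 1 = mu ! (j + 1)" using ldb Lj lmu unfolding Defs.part_def dbe by auto
    also have "\<dots> = j + 1" using Lj j3 by (simp add: mu_def G_nth L_def g_mid)
    finally show ?thesis .
  qed
  have sdb: "smallest (dbeta mu) \<ge> 2"
  proof -
    have ne: "dbeta mu \<noteq> []" using ldb Lj by auto
    have "set (dbeta mu) \<subseteq> set mu" using dbe set_drop_subset by metis
    hence "\<forall>x\<in>set (dbeta mu). 2 \<le> x" using G_pos[folded mu_def] by blast
    hence "2 \<le> Min (set (dbeta mu))" using ne by simp
    thus ?thesis using ne by (simp add: smallest_def numeral_eq_enat)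
  qed
  have rk: "rank mu = 0" using Lj lmu by (simp add: rank_def mu_def G_part L_def g_def)
  have "mu \<in> partitions_of (sum_list p)" using G_partition G_sum by (simp add: partitions_of_def mu_def)
  thus ?thesis unfolding P1bar_def mu_def[symmetric] Let_def
    using rk G_durfee[folded mu_def] lga ldb pga pdb sdb j3 by auto
qed

lemma recov_cnt: "cnt p k = recov (G p j) j (length p) k"
proof -
  consider "k \<le> 3" | "3 < k" "k \<le> j" | "j < k" "k \<le> j + 2" | "j + 2 < k" "k \<le> length p" | "length p < k"
    by linarith
  thus ?thesis
  proof cases
    case 1 thus ?thesis by (simp add: recov_def c5)
  next
    case 2
    have e: "k - 3 + 1 = k - 2" using 2 by simp
    have "G p j ! (k - 3) = g p j (k - 3 + 1)" using 2 L3 by (simp add: G_nth)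
    also have "\<dots> = g p j (k - 2)" using e by simp
    also have "\<dots> = cnt p k"
    proof -
      have "k - 2 \<noteq> 1" "k - 2 \<le> j - 2" "k - 2 + 2 = k" using 2 by auto
      thus ?thesis unfolding g_def by presburger
    qed
    finally show ?thesis using 2 by (simp add: recov_def)
  next
    case 3
    hence "k = j + 1 \<or> k = j + 2" by auto
    thus ?thesis using 3 c6a c6b j3 by (auto simp: recov_def)
  next
    case 4
    have "G p j ! (k - 1) = g p j k" using 4 by (simp add: G_nth)
    also have "\<dots> = cnt p k + 2" using 4 unfolding g_def by auto
    finally show ?thesis using 4 j3 by (simp add: recov_def)
  next
    case 5 thus ?thesis using c7[of k] L3 by (simp add: recov_def)
  qed
qed

end


theorem lemma5p1:
  fixes n :: nat
  assumes "n \<ge> 1"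
  shows "\<exists>f. inj_on f (Q1bar n) \<and> f ` Q1bar n \<subseteq> P1bar n"
proof (intro exI conjI)
  let ?f = "\<lambda>p. G p (durfee p)"
  have H: "is_partition p \<and> sum_list p = n \<and> sorted_wrt (\<ge>) p \<and> (\<forall>x\<in>set p. 3 \<le> x) \<and> 1 \<le> durfee p
      \<and> durfee p < length p \<and> p ! durfee p = durfee p \<and> p ! (durfee p - 1) = durfee p + 2
      \<and> p ! 0 + 1 \<le> length p" if "p \<in> Q1bar n" for p
    using Q_props[OF that] by (simp add: is_partition_def)
  show "?f ` Q1bar n \<subseteq> P1bar n"
  proof
    fix y assume "y \<in> ?f ` Q1bar n"
    then obtain p where p: "p \<in> Q1bar n" "y = ?f p" by blast
    from H[OF p(1)] G_P[of p "durfee p"] p(2) show "y \<in> P1bar n" by auto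
  qed
  show "inj_on ?f (Q1bar n)"
  proof
    fix p q assume p: "p \<in> Q1bar n" and q: "q \<in> Q1bar n" and e: "?f p = ?f q"
    note Hp = H[OF p] and Hq = H[OF q]
    have dp: "durfee (?f p) = durfee p + 1" using Hp G_durfee[of p "durfee p"] by auto
    have dq: "durfee (?f q) = durfee q + 1" using Hq G_durfee[of q "durfee q"] by auto
    have jj: "durfee p = durfee q" using dp dq e by simp
    have lp: "length (?f p) = length p" using Hp G_len[of p "durfee p"] by auto
    have lq: "length (?f q) = length q" using Hq G_len[of q "durfee q"] by auto
    have ll: "length p = length q" using lp lq e by simp
    have "cnt p k = cnt q k" for k
    proof -
      have "cnt p k = recov (?f p) (durfee p) (length p) k"
        using Hp recov_cnt[of p "durfee p" k] by auto
      also have "\<dots> = recov (?f q) (durfee q) (length q) k" using e jj ll by simp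
      also have "\<dots> = cnt q k"
        using Hq recov_cnt[of q "durfee q" k] by auto
      finally show ?thesis .
    qed
    thus "p = q" using eq_by_cnt Hp Hq by blast
  qed
qed

end
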